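(* Let $(\Omega,\mathcal E_\Omega,\mathbb P)$ be a probability space with data $X_{1:T}$, $\Theta$ a Borel subset of $\mathbf R^p$ with Borel $\sigma$-algebra, $\theta_0\in\Theta$, and $\theta^*_{T,C}$ a $\Theta$-valued random vector with $\theta^*_{T,C}\to\theta_0$ in $\mathbb P$-probability as $T\to\infty$. Let $\rho_P$ be the Prokhorov metric on probability measures on $\Theta$. Then: (i) $\rho_P(\delta_{\theta^*_{T,C}},\delta_{\theta_0})\to0$ in probability as $T\to\infty$; (ii) if moreover $u:\mathbf R^p\times\mathbf R^p\to\mathbf R_+$ satisfies: (a) $u=0$ outside $\Theta^2$ and $\theta\mapsto u(\theta,\dot\theta)$ is Borel measurable for each $\dot\theta\in\Theta$; (b) for each $\dot\theta\in\Theta$, $\theta\mapsto u(\dot\theta,\theta)$ is continuous in a neighborhood of $\theta_0$; (c) there is $r_1>0$ with $\int_\Theta\sup_{\dot\theta\in B_{r_1}(\theta_0)}u(\theta,\dot\theta)\,\lambda(d\theta)<\infty$; (d) there is $r_2>0$ with $\int_\Theta u(\theta,\dot\theta)\,\lambda(d\theta)>0$ for all $\dot\theta\in B_{r_2}(\theta_0)$; then, as $T\to\infty$, $$\rho_P\Big(\frac{\int_\cdot u(\theta,\theta^*_{T,C})\lambda(d\theta)}{\int_\Theta u(\dot\theta,\theta^*_{T,C})\lambda(d\dot\theta)},\ \frac{\int_\cdot u(\theta,\theta_0)\lambda(d\theta)}{\int_\Theta u(\dot\theta,\theta_0)\lambda(d\dot\theta)}\Big)\to0\ \text{in probability}.$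$
   Context: $\lambda$ is Lebesgue measure, $\delta_x$ the Dirac measure at $x$, and $B_r(\theta_0)$ the ball in $\Theta$ of radius $r$ centred at $\theta_0$. The displayed ratios denote probability measures $B\mapsto\int_B u(\theta,\cdot)\lambda(d\theta)/\int_\Theta u(\dot\theta,\cdot)\lambda(d\dot\theta)$ on Borel subsets of $\Theta$. *)

theory Defs
  imports "HOL-Probability.Probability"
begin

definition eps_nbhd :: "'a::metric_space set \<Rightarrow> 'a set \<Rightarrow> real \<Rightarrow> 'a set" where
  "eps_nbhd \<Theta> B \<epsilon> = {x \<in> \<Theta>. \<exists>y\<in>B. dist x y < \<epsilon>}"

definition prokhorov :: "'a::metric_space set \<Rightarrow> ('a set \<Rightarrow> real) \<Rightarrow> ('a set \<Rightarrow> real) \<Rightarrow> real" where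
  "prokhorov \<Theta> \<mu> \<nu> = Inf {\<epsilon>. \<epsilon> > 0 \<and>
     (\<forall>B \<in> sets (restrict_space borel \<Theta>).
        \<mu> B \<le> \<nu> (eps_nbhd \<Theta> B \<epsilon>) + \<epsilon> \<and> \<nu> B \<le> \<mu> (eps_nbhd \<Theta> B \<epsilon>) + \<epsilon>)}"

definition dirac_fun :: "'a \<Rightarrow> 'a set \<Rightarrow> real" where
  "dirac_fun x B = indicator B x"

definition dens_prob :: "('a::euclidean_space \<Rightarrow> 'a \<Rightarrow> real) \<Rightarrow> 'a set \<Rightarrow> 'a \<Rightarrow> 'a set \<Rightarrow> real" where
  "dens_prob u \<Theta> x B =
     enn2real (\<integral>\<^sup>+ \<theta>. ennreal (u \<theta> x) * indicator B \<theta> \<partial>lborel) /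
     enn2real (\<integral>\<^sup>+ \<theta>. ennreal (u \<theta> x) * indicator \<Theta> \<theta> \<partial>lborel)"

text \<open>Convergence to 0 in (outer) probability of a sequence of real functions on M:
  for every eps > 0 the event {|Z_T| > eps} is covered by events of probability tending to 0.
  For measurable Z this is ordinary convergence in probability.\<close>
definition conv_zero_in_prob :: "'w measure \<Rightarrow> (nat \<Rightarrow> 'w \<Rightarrow> real) \<Rightarrow> bool" where
  "conv_zero_in_prob M Z \<longleftrightarrow> (\<forall>\<epsilon>>0. \<exists>A. (\<forall>T. A T \<in> sets M \<and> {\<omega> \<in> space M. \<bar>Z T \<omega>\<bar> > \<epsilon>} \<subseteq> A T)
      \<and> (\<lambda>T. measure M (A T)) \<longlonglongrightarrow> 0)"

end

theory Submission
  imports Defs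
begin

lemma cover_lemma:
  fixes M :: "'w measure" and \<theta>s :: "nat \<Rightarrow> 'w \<Rightarrow> 'a::metric_space"
  assumes c: "conv_zero_in_prob M (\<lambda>T \<omega>. dist (\<theta>s T \<omega>) \<theta>0)"
    and h: "\<forall>\<epsilon>>0. \<exists>\<delta>>0. \<forall>T. \<forall>\<omega>\<in>space M. dist (\<theta>s T \<omega>) \<theta>0 < \<delta> \<longrightarrow> \<bar>Z T \<omega>\<bar> \<le> \<epsilon>"
  shows "conv_zero_in_prob M Z"
  unfolding conv_zero_in_prob_def
proof (intro allI impI)
  fix \<epsilon> :: real assume "\<epsilon> > 0"
  then obtain \<delta> where d: "\<delta> > 0" and hd: "\<forall>T. \<forall>\<omega>\<in>space M. dist (\<theta>s T \<omega>) \<theta>0 < \<delta> \<longrightarrow> \<bar>Z T \<omega>\<bar> \<le> \<epsilon>"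
    using h by blast
  from d have "\<delta>/2 > 0" by simp
  then obtain A where A: "\<forall>T. A T \<in> sets M \<and> {\<omega> \<in> space M. \<bar>dist (\<theta>s T \<omega>) \<theta>0\<bar> > \<delta>/2} \<subseteq> A T"
    and lim: "(\<lambda>T. measure M (A T)) \<longlonglongrightarrow> 0"
    using c unfolding conv_zero_in_prob_def by blast
  have "\<forall>T. A T \<in> sets M \<and> {\<omega> \<in> space M. \<bar>Z T \<omega>\<bar> > \<epsilon>} \<subseteq> A T"
  proof
    fix T
    have "{\<omega> \<in> space M. \<bar>Z T \<omega>\<bar> > \<epsilon>} \<subseteq> {\<omega> \<in> space M. \<bar>dist (\<theta>s T \<omega>) \<theta>0\<bar> > \<delta>/2}"
    proof
      fix \<omega> assume "\<omega> \<in> {\<omega> \<in> space M. \<bar>Z T \<omega>\<bar> > \<epsilon>}"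
      then have "\<omega> \<in> space M" "\<bar>Z T \<omega>\<bar> > \<epsilon>" by auto
      then have "\<not> dist (\<theta>s T \<omega>) \<theta>0 < \<delta>" using hd by force
      then show "\<omega> \<in> {\<omega> \<in> space M. \<bar>dist (\<theta>s T \<omega>) \<theta>0\<bar> > \<delta>/2}" using \<open>\<omega> \<in> space M\<close> d by auto
    qed
    then show "A T \<in> sets M \<and> {\<omega> \<in> space M. \<bar>Z T \<omega>\<bar> > \<epsilon>} \<subseteq> A T" using A by blast
  qed
  then show "\<exists>A. (\<forall>T. A T \<in> sets M \<and> {\<omega> \<in> space M. \<bar>Z T \<omega>\<bar> > \<epsilon>} \<subseteq> A T) \<and> (\<lambda>T. measure M (A T)) \<longlonglongrightarrow> 0"
    using lim by blast
qed

lemma prok_le: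
  assumes "\<epsilon> > 0"
    and "\<forall>B \<in> sets (restrict_space borel \<Theta>). \<mu> B \<le> \<nu> (eps_nbhd \<Theta> B \<epsilon>) + \<epsilon> \<and> \<nu> B \<le> \<mu> (eps_nbhd \<Theta> B \<epsilon>) + \<epsilon>"
  shows "\<bar>prokhorov \<Theta> \<mu> \<nu>\<bar> \<le> \<epsilon>"
proof -
  let ?S = "{\<epsilon>. \<epsilon> > 0 \<and> (\<forall>B \<in> sets (restrict_space borel \<Theta>).
        \<mu> B \<le> \<nu> (eps_nbhd \<Theta> B \<epsilon>) + \<epsilon> \<and> \<nu> B \<le> \<mu> (eps_nbhd \<Theta> B \<epsilon>) + \<epsilon>)}"
  have in_S: "\<epsilon> \<in> ?S" using assms by blast
  have bdd: "bdd_below ?S" by (rule bdd_belowI[of _ 0]) auto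
  have "Inf ?S \<le> \<epsilon>" using cInf_lower[OF in_S bdd] .
  moreover have "0 \<le> Inf ?S" using in_S by (intro cInf_greatest) auto
  ultimately show ?thesis unfolding prokhorov_def by simp
qed

lemma restrict_sets:
  assumes "\<Theta> \<in> sets borel" "B \<in> sets (restrict_space borel \<Theta>)"
  shows "B \<in> sets borel" "B \<subseteq> \<Theta>"
  using assms by (auto simp: sets_restrict_space_iff)

lemma nbhd_props:
  assumes "B \<subseteq> \<Theta>" "\<epsilon> > 0"
  shows "B \<subseteq> eps_nbhd \<Theta> B \<epsilon>" "eps_nbhd \<Theta> B \<epsilon> \<subseteq> \<Theta>"
  using assms unfolding eps_nbhd_def by force+

lemma part1:
  fixes \<Theta> :: "'a::metric_space set"
  assumes "\<theta>0 \<in> \<Theta>" "x \<in> \<Theta>" "dist x \<theta>0 < \<epsilon>"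
  shows "\<bar>prokhorov \<Theta> (dirac_fun x) (dirac_fun \<theta>0)\<bar> \<le> \<epsilon>"
proof (rule prok_le)
  show "\<epsilon> > 0" using assms(3) zero_le_dist[of x \<theta>0] by linarith
  then show "\<forall>B \<in> sets (restrict_space borel \<Theta>). dirac_fun x B \<le> dirac_fun \<theta>0 (eps_nbhd \<Theta> B \<epsilon>) + \<epsilon> \<and> dirac_fun \<theta>0 B \<le> dirac_fun x (eps_nbhd \<Theta> B \<epsilon>) + \<epsilon>"
    using assms by (auto simp: dirac_fun_def indicator_def eps_nbhd_def dist_commute)
qed

lemma real_ineq:
  fixes ay a0 Dy D0 l \<epsilon> :: real
  assumes "\<bar>ay - a0\<bar> \<le> l" "\<bar>Dy - D0\<bar> \<le> l" "0 \<le> a0" "a0 \<le> D0" "D0 > 0"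
    "l \<le> D0/2" "l \<le> \<epsilon> * D0 / 4"
  shows "\<bar>ay/Dy - a0/D0\<bar> \<le> \<epsilon>"
proof -
  have Dy: "Dy \<ge> D0/2" using assms by linarith
  hence Dyp: "Dy > 0" using assms by linarith
  have eq: "ay/Dy - a0/D0 = ((ay - a0)*D0 + a0*(D0 - Dy)) / (Dy*D0)"
    using Dyp assms(5) by (simp add: field_simps)
  have "\<bar>(ay - a0)*D0\<bar> \<le> l * D0" using assms by (simp add: abs_mult mult_right_mono)
  moreover have "\<bar>a0*(D0 - Dy)\<bar> \<le> D0 * l"
    using assms by (simp add: abs_mult mult_mono abs_minus_commute)
  ultimately have "\<bar>(ay - a0)*D0 + a0*(D0 - Dy)\<bar> \<le> l*D0 + D0*l"
    using abs_triangle_ineq[of "(ay - a0)*D0" "a0*(D0 - Dy)"] by linarith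
  then have num: "\<bar>(ay - a0)*D0 + a0*(D0 - Dy)\<bar> \<le> 2*l*D0" by (simp add: mult.commute)
  have "\<bar>ay/Dy - a0/D0\<bar> = \<bar>(ay - a0)*D0 + a0*(D0 - Dy)\<bar> / (Dy*D0)"
    using eq Dyp assms(5) by (simp add: abs_divide abs_mult)
  also have "\<dots> \<le> 2*l*D0 / (Dy*D0)"
    using num Dyp assms(5) by (intro divide_right_mono) auto
  also have "\<dots> = 2*l/Dy" using assms(5) by simp
  also have "\<dots> \<le> 2*l/(D0/2)"
    using Dy assms(5) assms(1) by (intro divide_left_mono) auto
  also have "\<dots> = 4*l/D0" by simp
  also have "\<dots> \<le> \<epsilon>" using assms(5,7) by (simp add: divide_le_eq)
  finally show ?thesis .
qed


lemma conv_L1: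
  fixes \<Theta> :: "'a::euclidean_space set" and u :: "'a \<Rightarrow> 'a \<Rightarrow> real"
  assumes \<theta>0: "\<theta>0 \<in> \<Theta>"
    and nn: "\<forall>x y. u x y \<ge> 0" and out: "\<forall>x y. (x,y) \<notin> \<Theta>\<times>\<Theta> \<longrightarrow> u x y = 0"
    and meas: "\<forall>y\<in>\<Theta>. (\<lambda>x. u x y) \<in> borel_measurable borel"
    and cont: "\<forall>y\<in>\<Theta>. \<exists>U. open U \<and> \<theta>0 \<in> U \<and> continuous_on U (\<lambda>x. u y x)"
    and r1: "r1 > 0"
    and fin: "(\<integral>\<^sup>+ x. (SUP y \<in> ball \<theta>0 r1 \<inter> \<Theta>. ennreal (u x y)) * indicator \<Theta> x \<partial>lborel) < \<infinity>"
    and e: "e > 0"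
  shows "\<exists>\<delta>>0. \<forall>y\<in>\<Theta>. dist y \<theta>0 < \<delta> \<longrightarrow> (\<integral>\<^sup>+ x. ennreal \<bar>u x \<theta>0 - u x y\<bar> \<partial>lborel) < ennreal e"
proof (rule ccontr)
  assume neg: "\<not> ?thesis"
  have "\<forall>n::nat. \<exists>y. y \<in> \<Theta> \<and> dist y \<theta>0 < min r1 (1 / Suc n) \<and> \<not> (\<integral>\<^sup>+ x. ennreal \<bar>u x \<theta>0 - u x y\<bar> \<partial>lborel) < ennreal e"
  proof
    fix n :: nat
    have "min r1 (1 / Suc n) > 0" using r1 by simp
    then show "\<exists>y. y \<in> \<Theta> \<and> dist y \<theta>0 < min r1 (1 / Suc n) \<and> \<not> (\<integral>\<^sup>+ x. ennreal \<bar>u x \<theta>0 - u x y\<bar> \<partial>lborel) < ennreal e"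
      using neg by blast
  qed
  then obtain y where yall: "\<forall>n. y n \<in> \<Theta> \<and> dist (y n) \<theta>0 < min r1 (1 / Suc n) \<and> \<not> (\<integral>\<^sup>+ x. ennreal \<bar>u x \<theta>0 - u x (y n)\<bar> \<partial>lborel) < ennreal e"
    by (rule choice[THEN exE]) 
  then have yT: "\<And>n. y n \<in> \<Theta>" and yd: "\<And>n. dist (y n) \<theta>0 < min r1 (1 / Suc n)"
    and yL: "\<And>n. \<not> (\<integral>\<^sup>+ x. ennreal \<bar>u x \<theta>0 - u x (y n)\<bar> \<partial>lborel) < ennreal e"
    by auto
  have yb: "y n \<in> ball \<theta>0 r1 \<inter> \<Theta>" for n using yT yd by (auto simp: dist_commute)
  have ylim: "y \<longlonglongrightarrow> \<theta>0"
  proof (rule LIMSEQ_I)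
    fix r :: real assume "r > 0"
    then obtain N where N: "1 / real (Suc N) < r" using nat_approx_posE by blast
    show "\<exists>no. \<forall>n\<ge>no. norm (y n - \<theta>0) < r"
    proof (intro exI allI impI)
      fix n assume "n \<ge> N"
      then have "1 / real (Suc n) \<le> 1 / real (Suc N)" by (simp add: frac_le)
      then show "norm (y n - \<theta>0) < r" using yd[of n] N by (simp add: dist_norm)
    qed
  qed
  define S where "S x = (SUP i. ennreal (u x (y i)))" for x
  define G where "G x = (SUP y \<in> ball \<theta>0 r1 \<inter> \<Theta>. ennreal (u x y)) * indicator \<Theta> x" for x
  have mu: "(\<lambda>x. u x (y i)) \<in> borel_measurable lborel" for i using meas yT by simp
  have mu0: "(\<lambda>x. u x \<theta>0) \<in> borel_measurable lborel" using meas \<theta>0 by simp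
  have Smeas: "S \<in> borel_measurable lborel" unfolding S_def
  proof (rule borel_measurable_SUP)
    fix i
    have "(\<lambda>x. u x (y i)) \<in> borel_measurable borel" using meas yT by simp
    then show "(\<lambda>x. ennreal (u x (y i))) \<in> borel_measurable lborel"
      by (simp add: measurable_compose[OF _ measurable_ennreal])
  qed simp
  have SG: "S x \<le> G x" for x
  proof (cases "x \<in> \<Theta>")
    case True
    have "S x \<le> (SUP y \<in> ball \<theta>0 r1 \<inter> \<Theta>. ennreal (u x y))"
      unfolding S_def by (rule SUP_least) (rule SUP_upper, rule yb)
    then show ?thesis unfolding G_def using True by simp
  next
    case False
    then show ?thesis unfolding S_def G_def using out by auto
  qed
  have Sfin: "(\<integral>\<^sup>+ x. S x \<partial>lborel) < \<infinity>"
  proof -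
    have "(\<integral>\<^sup>+ x. S x \<partial>lborel) \<le> (\<integral>\<^sup>+ x. G x \<partial>lborel)" by (rule nn_integral_mono) (rule SG)
    then show ?thesis using fin unfolding G_def by (rule le_less_trans)
  qed
  define w where "w x = enn2real (S x)" for x
  have wmeas: "w \<in> borel_measurable lborel" unfolding w_def using Smeas by (rule borel_measurable_enn2real)
  have AEfin: "AE x in lborel. S x \<noteq> \<infinity>" using nn_integral_PInf_AE[OF Smeas] Sfin by simp
  have "(\<lambda>i. (\<integral>\<^sup>+x. norm (u x \<theta>0 - u x (y i)) \<partial>lborel)) \<longlonglongrightarrow> 0"
  proof (rule nn_integral_dominated_convergence_norm[where w=w])
    show "\<And>i. (\<lambda>x. u x (y i)) \<in> borel_measurable lborel" by (rule mu)
    show "(\<lambda>x. u x \<theta>0) \<in> borel_measurable lborel" by (rule mu0)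
    show "w \<in> borel_measurable lborel" by (rule wmeas)
    show "AE x in lborel. norm (u x (y j)) \<le> w x" for j
      using AEfin
    proof eventually_elim
      case (elim x)
      have "ennreal (u x (y j)) \<le> S x" unfolding S_def by (rule SUP_upper) auto
      then have "enn2real (ennreal (u x (y j))) \<le> enn2real (S x)"
        using elim by (intro enn2real_mono) (auto simp: top_unique less_top)
      then show ?case using nn unfolding w_def by simp
    qed
    show "(\<integral>\<^sup>+ x. ennreal (w x) \<partial>lborel) < \<infinity>"
    proof -
      have "(\<integral>\<^sup>+ x. ennreal (w x) \<partial>lborel) \<le> (\<integral>\<^sup>+ x. S x \<partial>lborel)"
        unfolding w_def by (intro nn_integral_mono) (simp add: ennreal_enn2real_if)
      then show ?thesis using Sfin by (simp add: le_less_trans)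
    qed
    show "AE x in lborel. (\<lambda>i. u x (y i)) \<longlonglongrightarrow> u x \<theta>0"
    proof (rule AE_I2)
      fix x
      show "(\<lambda>i. u x (y i)) \<longlonglongrightarrow> u x \<theta>0"
      proof (cases "x \<in> \<Theta>")
        case True
        then obtain U where U: "open U" "\<theta>0 \<in> U" "continuous_on U (\<lambda>z. u x z)" using cont by blast
        have "eventually (\<lambda>i. y i \<in> U) sequentially"
          using topological_tendstoD[OF ylim U(1,2)] .
        then show ?thesis using continuous_on_tendsto_compose[OF U(3) ylim U(2)] by simp
      next
        case False
        then show ?thesis using out by simp
      qed
    qed
  qed
  then have lim: "(\<lambda>i. (\<integral>\<^sup>+x. ennreal \<bar>u x \<theta>0 - u x (y i)\<bar> \<partial>lborel)) \<longlonglongrightarrow> 0"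
    by (simp only: real_norm_def)
  have epos: "(0::ennreal) < ennreal e" using e by simp
  have "eventually (\<lambda>i. (\<integral>\<^sup>+x. ennreal \<bar>u x \<theta>0 - u x (y i)\<bar> \<partial>lborel) < ennreal e) sequentially"
    by (rule order_tendstoD(2)[OF lim epos])
  then obtain N where "\<forall>n\<ge>N. (\<integral>\<^sup>+x. ennreal \<bar>u x \<theta>0 - u x (y n)\<bar> \<partial>lborel) < ennreal e"
    unfolding eventually_sequentially by blast
  then have "(\<integral>\<^sup>+x. ennreal \<bar>u x \<theta>0 - u x (y N)\<bar> \<partial>lborel) < ennreal e" by simp
  then show False using yL[of N] by simp
qed


lemma N_mono:
  assumes "S \<subseteq> T"
  shows "(\<integral>\<^sup>+ x. ennreal (f x) * indicator S x \<partial>M) \<le> (\<integral>\<^sup>+ x. ennreal (f x) * indicator T x \<partial>M)"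
  using assms by (intro nn_integral_mono) (auto simp: indicator_def)

lemma enn_real_close:
  assumes "X \<le> Y + L" "Y \<le> X + L" "X < \<infinity>" "Y < \<infinity>" "L < \<infinity>"
  shows "\<bar>enn2real X - enn2real Y\<bar> \<le> enn2real L"
proof -
  obtain x where x: "x \<ge> 0" "X = ennreal x" using assms(3) by (cases X) auto
  obtain y where y: "y \<ge> 0" "Y = ennreal y" using assms(4) by (cases Y) auto
  obtain l where l: "l \<ge> 0" "L = ennreal l" using assms(5) by (cases L) auto
  have "ennreal x \<le> ennreal (y + l)" using assms(1) x y l by (simp add: ennreal_plus)
  moreover have "0 \<le> y + l" using y l by simp
  ultimately have 1: "x \<le> y + l" using ennreal_le_iff by blast
  have "ennreal y \<le> ennreal (x + l)" using assms(2) x y l by (simp add: ennreal_plus)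
  moreover have "0 \<le> x + l" using x l by simp
  ultimately have 2: "y \<le> x + l" using ennreal_le_iff by blast
  show ?thesis using 1 2 x y l by simp
qed

lemma pointwise_close:
  assumes "a \<ge> 0" "b \<ge> 0"
  shows "ennreal a * indicator B x \<le> ennreal b * indicator B x + ennreal \<bar>b - a\<bar>"
proof (cases "x \<in> B")
  case True
  have "ennreal a \<le> ennreal (b + \<bar>b - a\<bar>)" by (intro ennreal_leI) simp
  then show ?thesis using True assms by (simp add: ennreal_plus)
qed simp

lemma part2:
  fixes \<Theta> :: "'a::euclidean_space set" and u :: "'a \<Rightarrow> 'a \<Rightarrow> real"
  assumes \<Theta>: "\<Theta> \<in> sets borel" and \<theta>0: "\<theta>0 \<in> \<Theta>"
    and nn: "\<forall>x y. u x y \<ge> 0" and out: "\<forall>x y. (x,y) \<notin> \<Theta>\<times>\<Theta> \<longrightarrow> u x y = 0"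
    and meas: "\<forall>y\<in>\<Theta>. (\<lambda>x. u x y) \<in> borel_measurable borel"
    and cont: "\<forall>y\<in>\<Theta>. \<exists>U. open U \<and> \<theta>0 \<in> U \<and> continuous_on U (\<lambda>x. u y x)"
    and r1: "r1 > 0"
    and fin: "(\<integral>\<^sup>+ x. (SUP y \<in> ball \<theta>0 r1 \<inter> \<Theta>. ennreal (u x y)) * indicator \<Theta> x \<partial>lborel) < \<infinity>"
    and pos: "(\<integral>\<^sup>+ x. ennreal (u x \<theta>0) * indicator \<Theta> x \<partial>lborel) > 0"
    and \<epsilon>: "\<epsilon> > 0"
  shows "\<exists>\<delta>>0. \<forall>y\<in>\<Theta>. dist y \<theta>0 < \<delta> \<longrightarrow> \<bar>prokhorov \<Theta> (dens_prob u \<Theta> y) (dens_prob u \<Theta> \<theta>0)\<bar> \<le> \<epsilon>"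
proof -
  define N where "N y S = (\<integral>\<^sup>+ x. ennreal (u x y) * indicator S x \<partial>lborel)" for y S
  have Nfin: "N y S < \<infinity>" if "y \<in> ball \<theta>0 r1 \<inter> \<Theta>" "S \<subseteq> \<Theta>" for y S
  proof -
    have "N y S \<le> N y \<Theta>" unfolding N_def using that(2) by (rule N_mono)
    also have "N y \<Theta> \<le> (\<integral>\<^sup>+ x. (SUP y \<in> ball \<theta>0 r1 \<inter> \<Theta>. ennreal (u x y)) * indicator \<Theta> x \<partial>lborel)"
      unfolding N_def
    proof (rule nn_integral_mono)
      fix x
      show "ennreal (u x y) * indicator \<Theta> x \<le> (SUP y \<in> ball \<theta>0 r1 \<inter> \<Theta>. ennreal (u x y)) * indicator \<Theta> x"
      proof (cases "x \<in> \<Theta>")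
        case True
        have "ennreal (u x y) \<le> (SUP y \<in> ball \<theta>0 r1 \<inter> \<Theta>. ennreal (u x y))"
          by (rule SUP_upper) (rule that(1))
        then show ?thesis using True by simp
      qed simp
    qed
    also have "\<dots> < \<infinity>" by (rule fin)
    finally show ?thesis .
  qed
  have \<theta>0b: "\<theta>0 \<in> ball \<theta>0 r1 \<inter> \<Theta>" using r1 \<theta>0 by simp
  define D0 where "D0 = enn2real (N \<theta>0 \<Theta>)"
  have D0pos: "D0 > 0" unfolding D0_def using pos Nfin[OF \<theta>0b order.refl]
    unfolding N_def by (simp add: enn2real_positive_iff)
  define e where "e = min (D0/2) (\<epsilon>*D0/4)"
  have e: "e > 0" unfolding e_def using D0pos \<epsilon> by simp
  obtain \<delta>1 where \<delta>1: "\<delta>1 > 0" and h1: "\<forall>y\<in>\<Theta>. dist y \<theta>0 < \<delta>1 \<longrightarrow> (\<integral>\<^sup>+ x. ennreal \<bar>u x \<theta>0 - u x y\<bar> \<partial>lborel) < ennreal e"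
    using conv_L1[OF \<theta>0 nn out meas cont r1 fin e] by blast
  show ?thesis
  proof (intro exI[of _ "min \<delta>1 r1"] conjI ballI impI)
    show "min \<delta>1 r1 > 0" using \<delta>1 r1 by simp
    fix y assume yT: "y \<in> \<Theta>" and yd: "dist y \<theta>0 < min \<delta>1 r1"
    have yb: "y \<in> ball \<theta>0 r1 \<inter> \<Theta>" using yT yd by (simp add: dist_commute)
    define L where "L = (\<integral>\<^sup>+ x. ennreal \<bar>u x \<theta>0 - u x y\<bar> \<partial>lborel)"
    have Le: "L < ennreal e" unfolding L_def using h1 yT yd by simp
    have Lfin: "L < \<infinity>" using order.strict_trans[OF Le ennreal_less_top] by simp
    have le: "enn2real L \<le> e"
    proof -
      have "enn2real L \<le> enn2real (ennreal e)" using Le by (intro enn2real_mono) auto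
      then show ?thesis using e by simp
    qed
    have muy: "(\<lambda>x. u x y) \<in> borel_measurable lborel" using meas yT by simp
    have mu0: "(\<lambda>x. u x \<theta>0) \<in> borel_measurable lborel" using meas \<theta>0 by simp
    have close: "\<bar>enn2real (N y B) - enn2real (N \<theta>0 B)\<bar> \<le> enn2real L"
      if B: "B \<in> sets borel" "B \<subseteq> \<Theta>" for B
    proof (rule enn_real_close)
      have mB: "indicator B \<in> borel_measurable lborel" using B by simp
      have mA: "(\<lambda>x. ennreal \<bar>u x \<theta>0 - u x y\<bar>) \<in> borel_measurable lborel"
        using muy mu0 by measurable
      have my: "(\<lambda>x. ennreal (u x y) * indicator B x) \<in> borel_measurable lborel"
        using muy mB by measurable
      have m0: "(\<lambda>x. ennreal (u x \<theta>0) * indicator B x) \<in> borel_measurable lborel"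
        using mu0 mB by measurable
      have "N y B \<le> (\<integral>\<^sup>+ x. ennreal (u x \<theta>0) * indicator B x + ennreal \<bar>u x \<theta>0 - u x y\<bar> \<partial>lborel)"
        unfolding N_def using nn by (intro nn_integral_mono pointwise_close) auto
      also have "\<dots> = N \<theta>0 B + L" unfolding N_def L_def by (rule nn_integral_add[OF m0 mA])
      finally show "N y B \<le> N \<theta>0 B + L" .
      have "N \<theta>0 B \<le> (\<integral>\<^sup>+ x. ennreal (u x y) * indicator B x + ennreal \<bar>u x y - u x \<theta>0\<bar> \<partial>lborel)"
        unfolding N_def using nn by (intro nn_integral_mono pointwise_close) auto
      also have "\<dots> = (\<integral>\<^sup>+ x. ennreal (u x y) * indicator B x + ennreal \<bar>u x \<theta>0 - u x y\<bar> \<partial>lborel)"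
        by (simp add: abs_minus_commute)
      also have "\<dots> = N y B + L" unfolding N_def L_def by (rule nn_integral_add[OF my mA])
      finally show "N \<theta>0 B \<le> N y B + L" .
      show "N y B < \<infinity>" using Nfin[OF yb B(2)] .
      show "N \<theta>0 B < \<infinity>" using Nfin[OF \<theta>0b B(2)] .
      show "L < \<infinity>" by (rule Lfin)
    qed
    have dens: "dens_prob u \<Theta> z S = enn2real (N z S) / enn2real (N z \<Theta>)" for z S
      unfolding dens_prob_def N_def ..
    have closeD: "\<bar>dens_prob u \<Theta> y B - dens_prob u \<Theta> \<theta>0 B\<bar> \<le> \<epsilon>"
      if B: "B \<in> sets borel" "B \<subseteq> \<Theta>" for B
      unfolding dens D0_def[symmetric]
    proof (rule real_ineq[where l = "enn2real L"])
      show "\<bar>enn2real (N y B) - enn2real (N \<theta>0 B)\<bar> \<le> enn2real L" using close[OF B] .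
      show "\<bar>enn2real (N y \<Theta>) - D0\<bar> \<le> enn2real L" unfolding D0_def using close[OF \<Theta> order.refl] .
      show "0 \<le> enn2real (N \<theta>0 B)" by simp
      show "enn2real (N \<theta>0 B) \<le> D0" unfolding D0_def
      proof (rule enn2real_mono)
        show "N \<theta>0 B \<le> N \<theta>0 \<Theta>" unfolding N_def by (rule N_mono[OF B(2)])
        show "N \<theta>0 \<Theta> < \<top>" using Nfin[OF \<theta>0b order.refl] by simp
      qed
      show "D0 > 0" by (rule D0pos)
      show "enn2real L \<le> D0 / 2" using le unfolding e_def by simp
      show "enn2real L \<le> \<epsilon> * D0 / 4" using le unfolding e_def by simp
    qed
    have monoD: "dens_prob u \<Theta> z B \<le> dens_prob u \<Theta> z S"
      if "z \<in> ball \<theta>0 r1 \<inter> \<Theta>" "B \<subseteq> S" "S \<subseteq> \<Theta>" for z B S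
      unfolding dens
    proof (rule divide_right_mono)
      show "enn2real (N z B) \<le> enn2real (N z S)"
        using Nfin[OF that(1,3)] that(2) by (intro enn2real_mono) (auto simp: N_def intro: N_mono)
    qed simp
    show "\<bar>prokhorov \<Theta> (dens_prob u \<Theta> y) (dens_prob u \<Theta> \<theta>0)\<bar> \<le> \<epsilon>"
    proof (rule prok_le[OF \<epsilon>], intro ballI conjI)
      fix B assume "B \<in> sets (restrict_space borel \<Theta>)"
      then have B: "B \<in> sets borel" "B \<subseteq> \<Theta>" using restrict_sets[OF \<Theta>] by auto
      have nb: "B \<subseteq> eps_nbhd \<Theta> B \<epsilon>" "eps_nbhd \<Theta> B \<epsilon> \<subseteq> \<Theta>" using nbhd_props[OF B(2) \<epsilon>] by auto
      have c: "\<bar>dens_prob u \<Theta> y B - dens_prob u \<Theta> \<theta>0 B\<bar> \<le> \<epsilon>" by (rule closeD[OF B])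
      have m1: "dens_prob u \<Theta> \<theta>0 B \<le> dens_prob u \<Theta> \<theta>0 (eps_nbhd \<Theta> B \<epsilon>)" by (rule monoD[OF \<theta>0b nb])
      have m2: "dens_prob u \<Theta> y B \<le> dens_prob u \<Theta> y (eps_nbhd \<Theta> B \<epsilon>)" by (rule monoD[OF yb nb])
      show "dens_prob u \<Theta> y B \<le> dens_prob u \<Theta> \<theta>0 (eps_nbhd \<Theta> B \<epsilon>) + \<epsilon>" using c m1 by linarith
      show "dens_prob u \<Theta> \<theta>0 B \<le> dens_prob u \<Theta> y (eps_nbhd \<Theta> B \<epsilon>) + \<epsilon>" using c m2 by linarith
    qed
  qed
qed

theorem proposition5:
  fixes M :: "'w measure" and \<Theta> :: "'a::euclidean_space set" and \<theta>0 :: 'a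
    and \<theta>s :: "nat \<Rightarrow> 'w \<Rightarrow> 'a"
  assumes "prob_space M"
    and "\<Theta> \<in> sets borel"
    and "\<theta>0 \<in> \<Theta>"
    and "\<And>T. \<theta>s T \<in> borel_measurable M"
    and "\<And>T \<omega>. \<omega> \<in> space M \<Longrightarrow> \<theta>s T \<omega> \<in> \<Theta>"
    and "conv_zero_in_prob M (\<lambda>T \<omega>. dist (\<theta>s T \<omega>) \<theta>0)"
  shows "conv_zero_in_prob M (\<lambda>T \<omega>. prokhorov \<Theta> (dirac_fun (\<theta>s T \<omega>)) (dirac_fun \<theta>0))
    \<and> (\<forall>u :: 'a \<Rightarrow> 'a \<Rightarrow> real.
        ((\<forall>x y. u x y \<ge> 0)
         \<and> (\<forall>x y. (x, y) \<notin> \<Theta> \<times> \<Theta> \<longrightarrow> u x y = 0)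
         \<and> (\<forall>y\<in>\<Theta>. (\<lambda>x. u x y) \<in> borel_measurable borel)
         \<and> (\<forall>y\<in>\<Theta>. \<exists>U. open U \<and> \<theta>0 \<in> U \<and> continuous_on U (\<lambda>x. u y x))
         \<and> (\<exists>r1>0. (\<integral>\<^sup>+ x. (SUP y \<in> ball \<theta>0 r1 \<inter> \<Theta>. ennreal (u x y)) * indicator \<Theta> x \<partial>lborel) < \<infinity>)
         \<and> (\<exists>r2>0. \<forall>y \<in> ball \<theta>0 r2 \<inter> \<Theta>.
               (\<integral>\<^sup>+ x. ennreal (u x y) * indicator \<Theta> x \<partial>lborel) > 0))
        \<longrightarrow> conv_zero_in_prob M (\<lambda>T \<omega>. prokhorov \<Theta> (dens_prob u \<Theta> (\<theta>s T \<omega>)) (dens_prob u \<Theta> \<theta>0)))"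
  proof (rule conjI)
  show "conv_zero_in_prob M (\<lambda>T \<omega>. prokhorov \<Theta> (dirac_fun (\<theta>s T \<omega>)) (dirac_fun \<theta>0))"
  proof (rule cover_lemma[OF assms(6)], intro allI impI)
    fix \<epsilon> :: real assume "\<epsilon> > 0"
    show "\<exists>\<delta>>0. \<forall>T. \<forall>\<omega>\<in>space M. dist (\<theta>s T \<omega>) \<theta>0 < \<delta> \<longrightarrow> \<bar>prokhorov \<Theta> (dirac_fun (\<theta>s T \<omega>)) (dirac_fun \<theta>0)\<bar> \<le> \<epsilon>"
      using \<open>\<epsilon> > 0\<close> part1[OF assms(3) assms(5)] by blast
  qed
  show "\<forall>u :: 'a \<Rightarrow> 'a \<Rightarrow> real.
        ((\<forall>x y. u x y \<ge> 0)
         \<and> (\<forall>x y. (x, y) \<notin> \<Theta> \<times> \<Theta> \<longrightarrow> u x y = 0)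
         \<and> (\<forall>y\<in>\<Theta>. (\<lambda>x. u x y) \<in> borel_measurable borel)
         \<and> (\<forall>y\<in>\<Theta>. \<exists>U. open U \<and> \<theta>0 \<in> U \<and> continuous_on U (\<lambda>x. u y x))
         \<and> (\<exists>r1>0. (\<integral>\<^sup>+ x. (SUP y \<in> ball \<theta>0 r1 \<inter> \<Theta>. ennreal (u x y)) * indicator \<Theta> x \<partial>lborel) < \<infinity>)
         \<and> (\<exists>r2>0. \<forall>y \<in> ball \<theta>0 r2 \<inter> \<Theta>.
               (\<integral>\<^sup>+ x. ennreal (u x y) * indicator \<Theta> x \<partial>lborel) > 0))
        \<longrightarrow> conv_zero_in_prob M (\<lambda>T \<omega>. prokhorov \<Theta> (dens_prob u \<Theta> (\<theta>s T \<omega>)) (dens_prob u \<Theta> \<theta>0))"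
  proof (intro allI impI, elim conjE exE)
    fix u :: "'a \<Rightarrow> 'a \<Rightarrow> real" and r1 r2 :: real
    assume nn: "\<forall>x y. u x y \<ge> 0" and out: "\<forall>x y. (x, y) \<notin> \<Theta> \<times> \<Theta> \<longrightarrow> u x y = 0"
      and meas: "\<forall>y\<in>\<Theta>. (\<lambda>x. u x y) \<in> borel_measurable borel"
      and cont: "\<forall>y\<in>\<Theta>. \<exists>U. open U \<and> \<theta>0 \<in> U \<and> continuous_on U (\<lambda>x. u y x)"
      and r1: "r1 > 0" and fin: "(\<integral>\<^sup>+ x. (SUP y \<in> ball \<theta>0 r1 \<inter> \<Theta>. ennreal (u x y)) * indicator \<Theta> x \<partial>lborel) < \<infinity>"
      and r2: "r2 > 0" and pos2: "\<forall>y \<in> ball \<theta>0 r2 \<inter> \<Theta>. (\<integral>\<^sup>+ x. ennreal (u x y) * indicator \<Theta> x \<partial>lborel) > 0"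
    have pos: "(\<integral>\<^sup>+ x. ennreal (u x \<theta>0) * indicator \<Theta> x \<partial>lborel) > 0"
      using pos2 r2 assms(3) by simp
    show "conv_zero_in_prob M (\<lambda>T \<omega>. prokhorov \<Theta> (dens_prob u \<Theta> (\<theta>s T \<omega>)) (dens_prob u \<Theta> \<theta>0))"
    proof (rule cover_lemma[OF assms(6)], intro allI impI)
      fix \<epsilon> :: real assume e: "\<epsilon> > 0"
      obtain \<delta> where "\<delta> > 0" and h: "\<forall>y\<in>\<Theta>. dist y \<theta>0 < \<delta> \<longrightarrow> \<bar>prokhorov \<Theta> (dens_prob u \<Theta> y) (dens_prob u \<Theta> \<theta>0)\<bar> \<le> \<epsilon>"
        using part2[OF assms(2,3) nn out meas cont r1 fin pos e] by blast
      then show "\<exists>\<delta>>0. \<forall>T. \<forall>\<omega>\<in>space M. dist (\<theta>s T \<omega>) \<theta>0 < \<delta> \<longrightarrow> \<bar>prokhorov \<Theta> (dens_prob u \<Theta> (\<theta>s T \<omega>)) (dens_prob u \<Theta> \<theta>0)\<bar> \<le> \<epsilon>"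
        using assms(5) by blast
    qed
  qed
qed

end
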